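(* Let $\gamma\in\{0\}\cup(0,\infty)\cup\{\infty\}$. The minimum of the convex relaxed problem $\min_{u\in\mathcal{B}'}\ \sum_{i=1}^n\sum_{x\in V}C_i(x)u_i(x)+\sum_{i=1}^n TV_w(u_i)$ — with no size information if $\gamma=0$, with the penalty term $\sum_{i=1}^nP_\gamma(\|u_i\|)$ added to the energy if $0<\gamma<\infty$, and subject to the size constraints $S_i^\ell\le\|u_i\|\le S_i^u$ for all $i$ if $\gamma=\infty$ — equals the value of the dual problem $$\sup_{q,\rho^1,\rho^2}\ \sum_{x\in V}\min_{i\in I}\Big(C_i(x)+(\mathrm{div}_w q_i)(x)+\rho_i^2-\rho_i^1\Big)+\sum_{i=1}^n\big(\rho_i^1S_i^\ell-\rho_i^2S_i^u\big),$$ subject to $(q_1,\dots,q_n)\in S^n_\infty$ and $\rho_i^1,\rho_i^2\in[0,\gamma]$ for $i=1,\dots,n$ (where $[0,\infty]$ means $[0,\infty)$); i.e. the relaxed problem can equivalently be formulated as this dual problem.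
   Context: Let $G=(V,E)$ be a finite undirected graph with symmetric weights $w(x,y)=w(y,x)>0$ for $\{x,y\}\in E$ and $w(x,y)=0$ otherwise. For $v:V\to\mathbb{R}$, $TV_w(v)=\frac12\sum_{x,y\in V}w(x,y)|v(y)-v(x)|$. For $\phi:V\times V\to\mathbb{R}$, the divergence is $(\mathrm{div}_w\phi)(x)=\frac12\sum_{y\in V}w(x,y)(\phi(x,y)-\phi(y,x))$ and $\|\phi\|_{\infty}=\max_{x,y\in V}|\phi(x,y)|$. $S^n_\infty=\{(q_1,\dots,q_n):\ q_i:V\times V\to\mathbb{R},\ \|q_i\|_\infty\le1\ \forall i\}$. Let $n\ge2$, $I=\{1,\dots,n\}$, $C_i:V\to\mathbb{R}$ given. For $u=(u_1,\dots,u_n):V\to\mathbb{R}^n$, $\|u_i\|=\sum_{x\in V}u_i(x)$. $\mathcal{B}'=\{u:V\to[0,1]^n:\sum_iu_i(x)=1\ \forall x\}$. Size bounds are integers $0\le S_i^\ell\le S_i^u$ with $\sum_iS_i^\ell\le|V|\le\sum_iS_i^u$. For $0<\gamma<\infty$, $P_\gamma(t)=0$ if $S_i^\ell\le t\le S_i^u$, $\gamma(t-S_i^u)$ if $t>S_i^u$, $\gamma(S_i^\ell-t)$ if $t<S_i^\ell$. *)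

theory Defs
  imports "HOL-Analysis.Analysis"
begin

text \<open>Vertex set V is the (finite) universe of type 'v. Weights w :: 'v => 'v => real.\<close>

definition TVw :: "('v::finite \<Rightarrow> 'v \<Rightarrow> real) \<Rightarrow> ('v \<Rightarrow> real) \<Rightarrow> real" where
  "TVw w v = (1/2) * (\<Sum>x\<in>UNIV. \<Sum>y\<in>UNIV. w x y * \<bar>v y - v x\<bar>)"

definition divw :: "('v::finite \<Rightarrow> 'v \<Rightarrow> real) \<Rightarrow> ('v \<Rightarrow> 'v \<Rightarrow> real) \<Rightarrow> 'v \<Rightarrow> real" where
  "divw w \<phi> x = (1/2) * (\<Sum>y\<in>UNIV. w x y * (\<phi> x y - \<phi> y x))"

definition sup_norm :: "('v::finite \<Rightarrow> 'v \<Rightarrow> real) \<Rightarrow> real" where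
  "sup_norm \<phi> = Max {\<bar>\<phi> x y\<bar> | x y. True}"

definition Sinf :: "nat \<Rightarrow> (nat \<Rightarrow> 'v::finite \<Rightarrow> 'v \<Rightarrow> real) set" where
  "Sinf n = {q. \<forall>i\<in>{1..n}. sup_norm (q i) \<le> 1}"

definition mass :: "('v::finite \<Rightarrow> real) \<Rightarrow> real" where
  "mass v = (\<Sum>x\<in>UNIV. v x)"

definition Bprime :: "nat \<Rightarrow> (nat \<Rightarrow> 'v::finite \<Rightarrow> real) set" where
  "Bprime n = {u. \<forall>x. (\<forall>i\<in>{1..n}. 0 \<le> u i x \<and> u i x \<le> 1) \<and> (\<Sum>i=1..n. u i x) = 1}"

definition Pgam :: "real \<Rightarrow> nat \<Rightarrow> nat \<Rightarrow> real \<Rightarrow> real" where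
  "Pgam g Sl Su t = (if real Sl \<le> t \<and> t \<le> real Su then 0
                     else if t > real Su then g * (t - real Su) else g * (real Sl - t))"

definition primal_feasible :: "nat \<Rightarrow> ereal \<Rightarrow> (nat \<Rightarrow> nat) \<Rightarrow> (nat \<Rightarrow> nat)
    \<Rightarrow> (nat \<Rightarrow> 'v::finite \<Rightarrow> real) set" where
  "primal_feasible n \<gamma> Sl Su = {u \<in> Bprime n.
      \<gamma> = \<infinity> \<longrightarrow> (\<forall>i\<in>{1..n}. real (Sl i) \<le> mass (u i) \<and> mass (u i) \<le> real (Su i))}"

definition primal_energy :: "('v::finite \<Rightarrow> 'v \<Rightarrow> real) \<Rightarrow> nat \<Rightarrow> ereal \<Rightarrow> (nat \<Rightarrow> 'v \<Rightarrow> real)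
    \<Rightarrow> (nat \<Rightarrow> nat) \<Rightarrow> (nat \<Rightarrow> nat) \<Rightarrow> (nat \<Rightarrow> 'v \<Rightarrow> real) \<Rightarrow> real" where
  "primal_energy w n \<gamma> C Sl Su u =
     (\<Sum>i=1..n. \<Sum>x\<in>UNIV. C i x * u i x) + (\<Sum>i=1..n. TVw w (u i))
     + (if 0 < \<gamma> \<and> \<gamma> < \<infinity>
        then (\<Sum>i=1..n. Pgam (real_of_ereal \<gamma>) (Sl i) (Su i) (mass (u i))) else 0)"

definition dual_feasible :: "nat \<Rightarrow> ereal
    \<Rightarrow> ((nat \<Rightarrow> 'v::finite \<Rightarrow> 'v \<Rightarrow> real) \<times> (nat \<Rightarrow> real) \<times> (nat \<Rightarrow> real)) set" where
  "dual_feasible n \<gamma> = {(q, r1, r2). q \<in> Sinf n \<and>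
      (\<forall>i\<in>{1..n}. 0 \<le> r1 i \<and> ereal (r1 i) \<le> \<gamma> \<and> 0 \<le> r2 i \<and> ereal (r2 i) \<le> \<gamma>)}"

definition dual_objective :: "('v::finite \<Rightarrow> 'v \<Rightarrow> real) \<Rightarrow> nat \<Rightarrow> (nat \<Rightarrow> 'v \<Rightarrow> real)
    \<Rightarrow> (nat \<Rightarrow> nat) \<Rightarrow> (nat \<Rightarrow> nat)
    \<Rightarrow> (nat \<Rightarrow> 'v \<Rightarrow> 'v \<Rightarrow> real) \<times> (nat \<Rightarrow> real) \<times> (nat \<Rightarrow> real) \<Rightarrow> real" where
  "dual_objective w n C Sl Su d = (case d of (q, r1, r2) \<Rightarrow>
     (\<Sum>x\<in>UNIV. Min ((\<lambda>i. C i x + divw w (q i) x + r2 i - r1 i) ` {1..n}))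
     + (\<Sum>i=1..n. r1 i * real (Sl i) - r2 i * real (Su i)))"

end

theory Submission
  imports Defs
begin

lemma cont_coord [continuous_intros]: "continuous_on S (\<lambda>u::nat\<Rightarrow>'v\<Rightarrow>real. u i x)"
proof -
  have "continuous_on UNIV (\<lambda>u::nat\<Rightarrow>'v\<Rightarrow>real. u i)" by simp
  moreover have "continuous_on UNIV (\<lambda>f::'v\<Rightarrow>real. f x)" by simp
  ultimately have "continuous_on UNIV ((\<lambda>f::'v\<Rightarrow>real. f x) \<circ> (\<lambda>u::nat\<Rightarrow>'v\<Rightarrow>real. u i))"
    by (rule continuous_on_compose[OF _ continuous_on_subset]) auto
  then have "continuous_on UNIV (\<lambda>u::nat\<Rightarrow>'v\<Rightarrow>real. u i x)" by (simp add: o_def)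
  then show ?thesis by (rule continuous_on_subset) auto
qed

lemma two_fun:
  fixes X :: "'a::topological_space set" and f g :: "'a \<Rightarrow> real"
  assumes X: "compact X" and cf: "continuous_on X f" and cg: "continuous_on X g"
    and comb: "\<forall>x\<in>X. \<forall>x'\<in>X. \<forall>t\<in>{0..1::real}. \<exists>z\<in>X. f z = t*f x + (1-t)*f x' \<and> g z = t*g x + (1-t)*g x'"
    and mx: "\<forall>x\<in>X. f x > c \<or> g x > c"
  shows "\<exists>t\<in>{0..1::real}. \<forall>x\<in>X. t * f x + (1-t) * g x > c"
proof (cases "X = {}")
  case True then show ?thesis by auto
next
  case False
  define G where "G = (\<lambda>x. (f x, g x)) ` X"
  define Q where "Q = {p::real\<times>real. fst p \<le> c \<and> snd p \<le> c}"
  have cG: "compact G" unfolding G_def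
    by (intro compact_continuous_image continuous_on_Pair cf cg X)
  have vG: "convex G" unfolding convex_alt G_def
  proof (intro ballI allI impI)
    fix p p' and t :: real assume "p \<in> (\<lambda>x. (f x, g x)) ` X" "p' \<in> (\<lambda>x. (f x, g x)) ` X"
      and t: "0 \<le> t \<and> t \<le> 1"
    then obtain x x' where xx: "x\<in>X" "x'\<in>X" "p = (f x, g x)" "p' = (f x', g x')" by auto
    obtain z where "z\<in>X" "f z = (1-t)*f x + (1-(1-t))*f x'" "g z = (1-t)*g x + (1-(1-t))*g x'"
    proof -
      have "1-t \<in> {0..1}" using t by auto
      then show ?thesis using comb xx(1,2) that by blast
    qed
    then show "(1 - t) *\<^sub>R p + t *\<^sub>R p' \<in> (\<lambda>x. (f x, g x)) ` X"
      using xx by (auto intro!: image_eqI[where x=z])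
  qed
  have cQ: "closed Q" unfolding Q_def
    by (intro closed_Collect_conj closed_Collect_le continuous_intros)
  have vQ: "convex Q" unfolding Q_def convex_alt
  proof (intro ballI allI impI, clarsimp)
    fix a b a' b' :: real and t :: real
    assume h: "a \<le> c" "b \<le> c" "a' \<le> c" "b' \<le> c" "0 \<le> t" "t \<le> 1"
    have "(1-t)*a + t*a' \<le> (1-t)*c + t*c"
      using h by (intro add_mono mult_left_mono) auto
    moreover have "(1-t)*b + t*b' \<le> (1-t)*c + t*c"
      using h by (intro add_mono mult_left_mono) auto
    ultimately show "(1-t)*a + t*a' \<le> c \<and> (1-t)*b + t*b' \<le> c" by (simp add: algebra_simps)
  qed
  have disj: "Q \<inter> G = {}" using mx unfolding Q_def G_def by auto
  have "G \<noteq> {}" using False unfolding G_def by auto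
  from separating_hyperplane_closed_compact[OF vQ cQ vG cG this disj]
  obtain a b where ab: "\<forall>x\<in>Q. inner a x < b" "\<forall>x\<in>G. inner a x > b" by blast
  obtain a1 a2 where a: "a = (a1, a2)" by (cases a)
  have inQ: "\<And>p1 p2. p1 \<le> c \<Longrightarrow> p2 \<le> c \<Longrightarrow> a1*p1 + a2*p2 < b"
    using ab(1) a unfolding Q_def by (auto simp: inner_prod_def)
  have inG: "\<And>x. x\<in>X \<Longrightarrow> a1 * f x + a2 * g x > b"
    using ab(2) a unfolding G_def by (auto simp: inner_prod_def)
  have cc: "a1*c + a2*c < b" using inQ by auto
  have a1: "a1 \<ge> 0"
  proof (rule ccontr)
    assume "\<not> a1 \<ge> 0" then have n: "a1 < 0" by simp
    define p where "p = min c ((b - a2*c)/a1)"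
    have "a1*p + a2*c < b" using inQ p_def by auto
    moreover have "a1*p + a2*c \<ge> b"
    proof (cases "c \<le> (b - a2*c)/a1")
      case True
      then have "a1 * c \<ge> b - a2*c" using n by (simp add: le_divide_eq mult.commute)
      then show ?thesis using True p_def by auto
    next
      case False
      then have "p = (b - a2*c)/a1" using p_def by auto
      then show ?thesis using n by simp
    qed
    ultimately show False by simp
  qed
  have a2: "a2 \<ge> 0"
  proof (rule ccontr)
    assume "\<not> a2 \<ge> 0" then have n: "a2 < 0" by simp
    define p where "p = min c ((b - a1*c)/a2)"
    have "a1*c + a2*p < b" using inQ p_def by auto
    moreover have "a1*c + a2*p \<ge> b"
    proof (cases "c \<le> (b - a1*c)/a2")
      case True
      then have "a2 * c \<ge> b - a1*c" using n by (simp add: le_divide_eq mult.commute)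
      then show ?thesis using True p_def by auto
    next
      case False
      then have "p = (b - a1*c)/a2" using p_def by auto
      then show ?thesis using n by simp
    qed
    ultimately show False by simp
  qed
  obtain x0 where "x0 \<in> X" using False by auto
  have spos: "a1 + a2 > 0"
  proof (rule ccontr)
    assume "\<not> a1 + a2 > 0" then have "a1 = 0" "a2 = 0" using a1 a2 by auto
    then show False using cc inG[OF \<open>x0\<in>X\<close>] by simp
  qed
  define t where "t = a1 / (a1 + a2)"
  have t01: "t \<in> {0..1}" using a1 a2 spos by (auto simp: t_def)
  have "\<forall>x\<in>X. t * f x + (1-t) * g x > c"
  proof
    fix x assume "x\<in>X"
    have "(a1+a2)*c < a1 * f x + a2 * g x" using cc inG[OF \<open>x\<in>X\<close>] by (simp add: algebra_simps)
    moreover have "1 - t = a2/(a1+a2)" using spos by (simp add: t_def field_simps)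
    ultimately have e: "t * f x + (1-t) * g x = (a1 * f x + a2 * g x)/(a1+a2)"
      using spos by (simp add: t_def add_divide_distrib)
    have "c < (a1 * f x + a2 * g x)/(a1+a2)"
      using spos \<open>(a1+a2)*c < a1 * f x + a2 * g x\<close> by (simp add: pos_less_divide_eq mult.commute)
    then show "t * f x + (1-t) * g x > c" using e by simp
  qed
  then show ?thesis using t01 by blast
qed

lemma finite_minimax:
  fixes L :: "'a::topological_space \<Rightarrow> 'b \<Rightarrow> real"
  assumes Dne: "D \<noteq> {}"
    and cont: "\<forall>y\<in>D. continuous_on UNIV (\<lambda>x. L x y)"
    and Dcomb: "\<forall>y\<in>D. \<forall>y'\<in>D. \<forall>t\<in>{0..1::real}. \<exists>z\<in>D. \<forall>x\<in>X. L x z = t * L x y + (1-t) * L x y'"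
    and fin: "finite Y" and YD: "Y \<subseteq> D"
  shows "\<forall>X'. X' \<subseteq> X \<longrightarrow> compact X' \<longrightarrow>
     (\<forall>x\<in>X'. \<forall>x'\<in>X'. \<forall>t\<in>{0..1::real}. \<exists>z\<in>X'. \<forall>y\<in>D. L z y = t * L x y + (1-t) * L x' y) \<longrightarrow>
     (\<forall>x\<in>X'. \<exists>y\<in>Y. L x y > c) \<longrightarrow> (\<exists>z\<in>D. \<forall>x\<in>X'. L x z > c)"
  using fin YD
proof (induction Y rule: finite_induct)
  case empty
  then show ?case using Dne by auto
next
  case (insert y0 Y)
  show ?case
  proof (intro allI impI)
    fix X' assume sub: "X' \<subseteq> X" and cX: "compact X'"
      and comb: "\<forall>x\<in>X'. \<forall>x'\<in>X'. \<forall>t\<in>{0..1::real}. \<exists>z\<in>X'. \<forall>y\<in>D. L z y = t * L x y + (1-t) * L x' y"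
      and cov: "\<forall>x\<in>X'. \<exists>y\<in>insert y0 Y. L x y > c"
    have y0: "y0 \<in> D" using insert by auto
    define X'' where "X'' = X' \<inter> {x. L x y0 \<le> c}"
    have cl: "closed {x. L x y0 \<le> c}"
      using cont y0 by (intro closed_Collect_le) auto
    have cX'': "compact X''" unfolding X''_def using cX cl by (rule compact_Int_closed)
    have comb'': "\<forall>x\<in>X''. \<forall>x'\<in>X''. \<forall>t\<in>{0..1::real}. \<exists>z\<in>X''. \<forall>y\<in>D. L z y = t * L x y + (1-t) * L x' y"
    proof (intro ballI)
      fix x x' and t :: real assume h: "x\<in>X''" "x'\<in>X''" "t \<in> {0..1}"
      then obtain z where z: "z\<in>X'" "\<forall>y\<in>D. L z y = t * L x y + (1-t) * L x' y"
        using comb unfolding X''_def by blast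
      have "t * L x y0 + (1-t) * L x' y0 \<le> t * c + (1-t) * c"
        using h unfolding X''_def by (intro add_mono mult_left_mono) auto
      moreover have "L z y0 = t * L x y0 + (1-t) * L x' y0" using z y0 by blast
      ultimately have "L z y0 \<le> c" by (simp add: algebra_simps)
      then show "\<exists>z\<in>X''. \<forall>y\<in>D. L z y = t * L x y + (1-t) * L x' y"
        using z unfolding X''_def by blast
    qed
    have cov'': "\<forall>x\<in>X''. \<exists>y\<in>Y. L x y > c" using cov unfolding X''_def by force
    obtain z' where z': "z' \<in> D" "\<forall>x\<in>X''. L x z' > c"
    proof -
      have YD': "Y \<subseteq> D" using insert.prems by auto
      have sub'': "X'' \<subseteq> X" using sub X''_def by auto
      have "\<exists>z\<in>D. \<forall>x\<in>X''. L x z > c"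
        using insert.IH[OF YD'] sub'' cX'' comb'' cov'' by blast
      then show ?thesis using that by blast
    qed
    have "\<exists>t\<in>{0..1::real}. \<forall>x\<in>X'. t * L x z' + (1-t) * L x y0 > c"
    proof (rule two_fun[OF cX])
      show "continuous_on X' (\<lambda>x. L x z')" using cont z' continuous_on_subset by blast
      show "continuous_on X' (\<lambda>x. L x y0)" using cont y0 continuous_on_subset by blast
      show "\<forall>x\<in>X'. \<forall>x'\<in>X'. \<forall>t\<in>{0..1::real}. \<exists>z\<in>X'. L z z' = t * L x z' + (1 - t) * L x' z' \<and>
          L z y0 = t * L x y0 + (1 - t) * L x' y0"
        using comb z'(1) y0 by metis
      show "\<forall>x\<in>X'. c < L x z' \<or> c < L x y0"
        using z'(2) unfolding X''_def by force
    qed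
    then obtain t where t: "t\<in>{0..1}" "\<forall>x\<in>X'. t * L x z' + (1-t) * L x y0 > c" by blast
    obtain z where z: "z\<in>D" "\<forall>x\<in>X. L x z = t * L x z' + (1-t) * L x y0"
      using Dcomb z'(1) y0 t(1) by blast
    show "\<exists>z\<in>D. \<forall>x\<in>X'. L x z > c"
      using z t(2) sub by (intro bexI[of _ z]) auto
  qed
qed

lemma minimax_cover:
  fixes L :: "'a::topological_space \<Rightarrow> 'b \<Rightarrow> real"
  assumes Dne: "D \<noteq> {}"
    and cont: "\<forall>y\<in>D. continuous_on UNIV (\<lambda>x. L x y)"
    and Dcomb: "\<forall>y\<in>D. \<forall>y'\<in>D. \<forall>t\<in>{0..1::real}. \<exists>z\<in>D. \<forall>x\<in>X. L x z = t * L x y + (1-t) * L x y'"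
    and cX: "compact X"
    and Xcomb: "\<forall>x\<in>X. \<forall>x'\<in>X. \<forall>t\<in>{0..1::real}. \<exists>z\<in>X. \<forall>y\<in>D. L z y = t * L x y + (1-t) * L x' y"
    and cov: "\<forall>x\<in>X. \<exists>y\<in>D. L x y > c"
  shows "\<exists>z\<in>D. \<forall>x\<in>X. L x z > c"
proof -
  have op: "\<forall>y\<in>D. open {x. L x y > c}"
    using cont by (auto intro!: open_Collect_less continuous_intros)
  have "X \<subseteq> \<Union> ((\<lambda>y. {x. L x y > c}) ` D)" using cov by auto
  then obtain Y where Y: "Y \<subseteq> D" "finite Y" "X \<subseteq> \<Union> ((\<lambda>y. {x. L x y > c}) ` Y)"
    using compactE_image[OF cX, of D "\<lambda>y. {x. L x y > c}"] op by metis
  have "\<forall>x\<in>X. \<exists>y\<in>Y. L x y > c" using Y(3) by auto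
  then show ?thesis
    using finite_minimax[OF Dne cont Dcomb Y(2) Y(1), rule_format, of X] cX Xcomb by blast
qed

definition Lag :: "('v::finite \<Rightarrow> 'v \<Rightarrow> real) \<Rightarrow> nat \<Rightarrow> (nat \<Rightarrow> 'v \<Rightarrow> real)
    \<Rightarrow> (nat \<Rightarrow> nat) \<Rightarrow> (nat \<Rightarrow> nat) \<Rightarrow> (nat \<Rightarrow> 'v \<Rightarrow> real)
    \<Rightarrow> (nat \<Rightarrow> 'v \<Rightarrow> 'v \<Rightarrow> real) \<times> (nat \<Rightarrow> real) \<times> (nat \<Rightarrow> real) \<Rightarrow> real" where
  "Lag w n C Sl Su u d = (case d of (q, r1, r2) \<Rightarrow>
     (\<Sum>i=1..n. \<Sum>x\<in>UNIV. u i x * (C i x + divw w (q i) x + r2 i - r1 i))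
     + (\<Sum>i=1..n. r1 i * real (Sl i) - r2 i * real (Su i)))"

lemma Lag_decomp:
  "Lag w n C Sl Su u (q, r1, r2) = (\<Sum>i=1..n. \<Sum>x\<in>UNIV. u i x * C i x)
     + (\<Sum>i=1..n. \<Sum>x\<in>UNIV. u i x * divw w (q i) x)
     + (\<Sum>i=1..n. r1 i * (real (Sl i) - mass (u i)) + r2 i * (mass (u i) - real (Su i)))"
proof -
  have e: "(\<Sum>x\<in>UNIV. u i x * (C i x + divw w (q i) x + r2 i - r1 i)) + (r1 i * real (Sl i) - r2 i * real (Su i))
     = (\<Sum>x\<in>UNIV. u i x * C i x) + (\<Sum>x\<in>UNIV. u i x * divw w (q i) x)
       + (r1 i * (real (Sl i) - mass (u i)) + r2 i * (mass (u i) - real (Su i)))" for i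
    by (simp add: mass_def algebra_simps sum.distrib sum_subtractf sum_distrib_left sum_distrib_right)
  show ?thesis unfolding Lag_def
    by (simp add: e sum.distrib[symmetric])
qed

lemma div_identity:
  fixes w :: "'v::finite \<Rightarrow> 'v \<Rightarrow> real"
  assumes sym: "\<And>x y. w x y = w y x"
  shows "(\<Sum>x\<in>UNIV. u x * divw w q x) = (1/2) * (\<Sum>x\<in>UNIV. \<Sum>y\<in>UNIV. w x y * q x y * (u x - u y))"
proof -
  have "(\<Sum>x\<in>UNIV. u x * divw w q x) = (1/2) * ((\<Sum>x\<in>UNIV. \<Sum>y\<in>UNIV. w x y * q x y * u x)
        - (\<Sum>x\<in>UNIV. \<Sum>y\<in>UNIV. w x y * q y x * u x))"
    unfolding divw_def
    by (simp add: sum_distrib_left sum_distrib_right sum_subtractf algebra_simps)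
  also have "(\<Sum>x\<in>UNIV. \<Sum>y\<in>UNIV. w x y * q y x * u x) = (\<Sum>y\<in>UNIV. \<Sum>x\<in>UNIV. w x y * q y x * u x)"
    by (rule sum.swap)
  also have "\<dots> = (\<Sum>x\<in>UNIV. \<Sum>y\<in>UNIV. w x y * q x y * u y)"
    using sym by simp
  finally show ?thesis
    by (simp add: sum_subtractf[symmetric] algebra_simps)
qed

lemma sup_norm_le1: "sup_norm (q :: 'v::finite \<Rightarrow> 'v \<Rightarrow> real) \<le> 1 \<longleftrightarrow> (\<forall>x y. \<bar>q x y\<bar> \<le> 1)"
proof -
  have eq: "{\<bar>q x y\<bar> | x y. True} = (\<lambda>p. \<bar>q (fst p) (snd p)\<bar>) ` UNIV"
  proof (intro equalityI subsetI)
    fix z assume "z \<in> {\<bar>q x y\<bar> | x y. True}"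
    then obtain x y where "z = \<bar>q x y\<bar>" by auto
    then show "z \<in> (\<lambda>p. \<bar>q (fst p) (snd p)\<bar>) ` UNIV" by (intro image_eqI[where x="(x,y)"]) auto
  qed auto
  have "finite {\<bar>q x y\<bar> | x y. True}" "{\<bar>q x y\<bar> | x y. True} \<noteq> {}" unfolding eq by auto
  then show ?thesis unfolding sup_norm_def by (auto simp: Max_le_iff)
qed

lemma div_le_TV:
  fixes w :: "'v::finite \<Rightarrow> 'v \<Rightarrow> real"
  assumes sym: "\<And>x y. w x y = w y x" and pos: "\<And>x y. 0 \<le> w x y"
    and q: "\<forall>x y. \<bar>q x y\<bar> \<le> 1"
  shows "(\<Sum>x\<in>UNIV. u x * divw w q x) \<le> TVw w u"
proof -
  have "w x y * q x y * (u x - u y) \<le> w x y * \<bar>u y - u x\<bar>" for x y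
  proof -
    have "q x y * (u x - u y) \<le> \<bar>q x y * (u x - u y)\<bar>" by simp
    also have "\<dots> = \<bar>q x y\<bar> * \<bar>u y - u x\<bar>" by (simp add: abs_mult abs_minus_commute)
    also have "\<dots> \<le> 1 * \<bar>u y - u x\<bar>" using q by (intro mult_right_mono) auto
    finally show ?thesis using pos[of x y] mult_left_mono by (simp add: mult.assoc mult_left_mono)
  qed
  then have "(\<Sum>x\<in>UNIV. \<Sum>y\<in>UNIV. w x y * q x y * (u x - u y)) \<le> (\<Sum>x\<in>UNIV. \<Sum>y\<in>UNIV. w x y * \<bar>u y - u x\<bar>)"
    by (intro sum_mono) auto
  then show ?thesis unfolding div_identity[OF sym] TVw_def by simp
qed

lemma div_eq_TV:
  fixes w :: "'v::finite \<Rightarrow> 'v \<Rightarrow> real"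
  assumes sym: "\<And>x y. w x y = w y x"
  shows "(\<Sum>x\<in>UNIV. u x * divw w (\<lambda>a b. sgn (u a - u b)) x) = TVw w u"
proof -
  have e: "w x y * sgn (u x - u y) * (u x - u y) = w x y * \<bar>u y - u x\<bar>" for x y
    by (simp add: mult.assoc abs_minus_commute abs_real_def sgn_real_def)
  have "(\<Sum>x\<in>UNIV. \<Sum>y\<in>UNIV. w x y * sgn (u x - u y) * (u x - u y)) = (\<Sum>x\<in>UNIV. \<Sum>y\<in>UNIV. w x y * \<bar>u y - u x\<bar>)"
    by (intro sum.cong refl e)
  then show ?thesis unfolding div_identity[OF sym] TVw_def by simp
qed

definition Xs :: "nat \<Rightarrow> (nat \<Rightarrow> 'v::finite \<Rightarrow> real) set" where
  "Xs n = {u \<in> Bprime n. \<forall>i. i \<notin> {1..n} \<longrightarrow> u i = (\<lambda>_. 0)}"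

lemma Lag_swap: "Lag w n C Sl Su u (q, r1, r2) =
   (\<Sum>x\<in>UNIV. \<Sum>i=1..n. u i x * (C i x + divw w (q i) x + r2 i - r1 i))
     + (\<Sum>i=1..n. r1 i * real (Sl i) - r2 i * real (Su i))"
  unfolding Lag_def by (simp, subst sum.swap, simp)

lemma Lag_ge_dual:
  assumes u: "u \<in> Bprime n"
  shows "dual_objective w n C Sl Su d \<le> Lag w n C Sl Su u d"
proof -
  obtain q r1 r2 where d: "d = (q, r1, r2)" by (cases d) auto
  define a where "a i x = C i x + divw w (q i) x + r2 i - r1 i" for i x
  have "Min ((\<lambda>i. a i x) ` {1..n}) \<le> (\<Sum>i=1..n. u i x * a i x)" for x
  proof -
    have "(\<Sum>i=1..n. u i x * Min ((\<lambda>i. a i x) ` {1..n})) \<le> (\<Sum>i=1..n. u i x * a i x)"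
      using u unfolding Bprime_def by (intro sum_mono mult_left_mono) auto
    moreover have "(\<Sum>i=1..n. u i x * Min ((\<lambda>i. a i x) ` {1..n})) = Min ((\<lambda>i. a i x) ` {1..n})"
      using u unfolding Bprime_def by (simp add: sum_distrib_right[symmetric])
    ultimately show ?thesis by simp
  qed
  then have "(\<Sum>x\<in>UNIV. Min ((\<lambda>i. a i x) ` {1..n})) \<le> (\<Sum>x\<in>UNIV. \<Sum>i=1..n. u i x * a i x)"
    by (intro sum_mono) auto
  then show ?thesis unfolding d Lag_swap dual_objective_def a_def by simp
qed

lemma dual_attained:
  assumes n: "n \<ge> 1"
  shows "\<exists>x0\<in>Xs n. Lag w n C Sl Su x0 d = dual_objective w n C Sl Su d"
proof -
  obtain q r1 r2 where d: "d = (q, r1, r2)" by (cases d) auto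
  define a where "a i x = C i x + divw w (q i) x + r2 i - r1 i" for i x
  define k where "k x = (SOME i. i \<in> {1..n} \<and> a i x = Min ((\<lambda>i. a i x) ` {1..n}))" for x
  have k: "k x \<in> {1..n} \<and> a (k x) x = Min ((\<lambda>i. a i x) ` {1..n})" for x
  proof -
    have "Min ((\<lambda>i. a i x) ` {1..n}) \<in> (\<lambda>i. a i x) ` {1..n}"
      using n by (intro Min_in) auto
    then have "\<exists>i. i \<in> {1..n} \<and> a i x = Min ((\<lambda>i. a i x) ` {1..n})" by auto
    then show ?thesis unfolding k_def by (rule someI_ex)
  qed
  define x0 where "x0 i x = (if i = k x then 1 else (0::real))" for i x
  have sumx0: "(\<Sum>i=1..n. x0 i x * f i) = f (k x)" for x and f :: "nat \<Rightarrow> real"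
  proof -
    have "(\<Sum>i=1..n. x0 i x * f i) = (\<Sum>i=1..n. if i = k x then f i else 0)"
      unfolding x0_def by (intro sum.cong) auto
    also have "\<dots> = f (k x)" using k[of x] by (simp add: sum.delta')
    finally show ?thesis .
  qed
  have "x0 \<in> Xs n"
  proof -
    have "(\<Sum>i=1..n. x0 i x) = 1" for x using sumx0[of x "\<lambda>_. 1"] by simp
    moreover have "i \<notin> {1..n} \<Longrightarrow> x0 i = (\<lambda>_. 0)" for i
      using k unfolding x0_def by (auto simp: fun_eq_iff)
    ultimately show ?thesis unfolding Xs_def Bprime_def x0_def by auto
  qed
  moreover have "Lag w n C Sl Su x0 d = dual_objective w n C Sl Su d"
    unfolding d Lag_swap dual_objective_def using sumx0 k by (simp add: a_def)
  ultimately show ?thesis by blast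
qed

lemma sum_comb: "(\<Sum>i\<in>A. t * f i + (1-t) * g i) = t * sum f A + (1-t) * (sum g A :: real)"
  by (simp add: sum.distrib sum_distrib_left)

lemma lin2: "(\<Sum>i\<in>A. \<Sum>x\<in>B. (t * u i x + (1-t) * u' i x) * (a i x :: real))
   = t * (\<Sum>i\<in>A. \<Sum>x\<in>B. u i x * a i x) + (1-t) * (\<Sum>i\<in>A. \<Sum>x\<in>B. u' i x * a i x)"
proof -
  have "(\<Sum>x\<in>B. (t * u i x + (1-t) * u' i x) * a i x) = t * (\<Sum>x\<in>B. u i x * a i x) + (1-t) * (\<Sum>x\<in>B. u' i x * a i x)" for i
  proof -
    have "(\<Sum>x\<in>B. (t * u i x + (1-t) * u' i x) * a i x) = (\<Sum>x\<in>B. t * (u i x * a i x) + (1-t) * (u' i x * a i x))"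
      by (rule sum.cong) (simp_all add: algebra_simps)
    then show ?thesis by (simp only: sum_comb)
  qed
  then show ?thesis by (simp only: sum_comb)
qed

lemma lin3: "(\<Sum>i\<in>A. \<Sum>x\<in>B. u i x * (t * a i x + (1-t) * a' i x))
   = t * (\<Sum>i\<in>A. \<Sum>x\<in>B. u i x * a i x) + (1-t) * (\<Sum>i\<in>A. \<Sum>x\<in>B. u i x * (a' i x :: real))"
proof -
  have "(\<Sum>x\<in>B. u i x * (t * a i x + (1-t) * a' i x)) = t * (\<Sum>x\<in>B. u i x * a i x) + (1-t) * (\<Sum>x\<in>B. u i x * a' i x)" for i
  proof -
    have "(\<Sum>x\<in>B. u i x * (t * a i x + (1-t) * a' i x)) = (\<Sum>x\<in>B. t * (u i x * a i x) + (1-t) * (u i x * a' i x))"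
      by (rule sum.cong) (simp_all add: algebra_simps)
    then show ?thesis by (simp only: sum_comb)
  qed
  then show ?thesis by (simp only: sum_comb)
qed

lemma Lag_lin_u:
  "Lag w n C Sl Su (\<lambda>i x. t * u i x + (1-t) * u' i x) d = t * Lag w n C Sl Su u d + (1-t) * Lag w n C Sl Su u' d"
proof -
  obtain q r1 r2 where d: "d = (q, r1, r2)" by (cases d) auto
  define a where "a i x = C i x + divw w (q i) x + r2 i - r1 i" for i x
  define K where "K = (\<Sum>i=1..n. r1 i * real (Sl i) - r2 i * real (Su i))"
  have L: "Lag w n C Sl Su v d = (\<Sum>i=1..n. \<Sum>x\<in>UNIV. v i x * a i x) + K" for v
    unfolding d Lag_def a_def K_def by simp
  show ?thesis unfolding L lin2 by (simp add: algebra_simps)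
qed

lemma Xs_comb:
  assumes "u \<in> Xs n" "u' \<in> Xs n" "t \<in> {0..1::real}"
  shows "(\<lambda>i x. t * u i x + (1-t) * u' i x) \<in> Xs n"
proof -
  have t: "0 \<le> t" "t \<le> 1" using assms(3) by auto
  have b: "\<forall>x. (\<forall>i\<in>{1..n}. 0 \<le> u i x \<and> u i x \<le> 1) \<and> (\<Sum>i=1..n. u i x) = 1"
          "\<forall>x. (\<forall>i\<in>{1..n}. 0 \<le> u' i x \<and> u' i x \<le> 1) \<and> (\<Sum>i=1..n. u' i x) = 1"
    using assms unfolding Xs_def Bprime_def by auto
  have z: "\<forall>i. i \<notin> {1..n} \<longrightarrow> u i = (\<lambda>_. 0)" "\<forall>i. i \<notin> {1..n} \<longrightarrow> u' i = (\<lambda>_. 0)"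
    using assms unfolding Xs_def by auto
  have r1: "0 \<le> t * u i x + (1-t) * u' i x" if "i \<in> {1..n}" for i x
    using b that t by (intro add_nonneg_nonneg mult_nonneg_nonneg) auto
  have r2: "t * u i x + (1-t) * u' i x \<le> 1" if "i \<in> {1..n}" for i x
  proof -
    have "t * u i x + (1-t) * u' i x \<le> t * 1 + (1-t) * 1"
      using b that t by (intro add_mono mult_left_mono) auto
    then show ?thesis by simp
  qed
  have r3: "(\<Sum>i=1..n. t * u i x + (1-t) * u' i x) = 1" for x
    using b by (simp add: sum.distrib sum_distrib_left[symmetric])
  show ?thesis unfolding Xs_def Bprime_def using r1 r2 r3 z by (auto simp: fun_eq_iff)
qed

lemma divw_lin:
  "divw w (\<lambda>a b. t * q a b + (1-t) * q' a b) x = t * divw w q x + (1-t) * divw w q' x"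
proof -
  have "(\<Sum>y\<in>UNIV. w x y * ((t * q x y + (1-t) * q' x y) - (t * q y x + (1-t) * q' y x)))
     = (\<Sum>y\<in>UNIV. t * (w x y * (q x y - q y x)) + (1-t) * (w x y * (q' x y - q' y x)))"
    by (rule sum.cong) (simp_all add: algebra_simps)
  then have e: "(\<Sum>y\<in>UNIV. w x y * ((t * q x y + (1-t) * q' x y) - (t * q y x + (1-t) * q' y x)))
     = t * (\<Sum>y\<in>UNIV. w x y * (q x y - q y x)) + (1-t) * (\<Sum>y\<in>UNIV. w x y * (q' x y - q' y x))"
    by (simp only: sum_comb)
  have h: "S = t*A + (1-t)*B \<Longrightarrow> 1/2*S = t*(1/2*A) + (1-t)*(1/2*(B::real))" for S A B
    by (simp add: field_simps)
  show ?thesis unfolding divw_def by (rule h[OF e])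
qed

lemma ereal_comb_le:
  assumes "ereal r \<le> g" "ereal r' \<le> g" "0 \<le> t" "t \<le> 1"
  shows "ereal (t * r + (1-t) * r') \<le> g"
proof (cases g)
  case (real c)
  then have "r \<le> c" "r' \<le> c" using assms by auto
  then have "t * r + (1-t) * r' \<le> t * c + (1-t) * c" using assms by (intro add_mono mult_left_mono) auto
  then show ?thesis using real by (simp add: algebra_simps)
next
  case PInf then show ?thesis by simp
next
  case MInf then show ?thesis using assms by simp
qed

lemma D_comb:
  assumes "d \<in> dual_feasible n \<gamma>" "d' \<in> dual_feasible n \<gamma>" "t \<in> {0..1::real}"
  shows "\<exists>z\<in>dual_feasible n \<gamma>. \<forall>u. Lag w n C Sl Su u z = t * Lag w n C Sl Su u d + (1-t) * Lag w n C Sl Su u d'"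
proof -
  obtain q r1 r2 where d: "d = (q, r1, r2)" by (cases d) auto
  obtain q' r1' r2' where d': "d' = (q', r1', r2')" by (cases d') auto
  have t: "0 \<le> t" "t \<le> 1" using assms(3) by auto
  define z where "z = ((\<lambda>i a b. t * q i a b + (1-t) * q' i a b), (\<lambda>i. t * r1 i + (1-t) * r1' i),
      (\<lambda>i. t * r2 i + (1-t) * r2' i))"
  have hq: "\<forall>i\<in>{1..n}. \<forall>x y. \<bar>q i x y\<bar> \<le> 1" "\<forall>i\<in>{1..n}. \<forall>x y. \<bar>q' i x y\<bar> \<le> 1"
    using assms(1,2) unfolding d d' dual_feasible_def Sinf_def sup_norm_le1 by auto
  have hr: "\<forall>i\<in>{1..n}. 0 \<le> r1 i \<and> ereal (r1 i) \<le> \<gamma> \<and> 0 \<le> r2 i \<and> ereal (r2 i) \<le> \<gamma>"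
           "\<forall>i\<in>{1..n}. 0 \<le> r1' i \<and> ereal (r1' i) \<le> \<gamma> \<and> 0 \<le> r2' i \<and> ereal (r2' i) \<le> \<gamma>"
    using assms(1,2) unfolding d d' dual_feasible_def by auto
  have "\<bar>t * q i x y + (1-t) * q' i x y\<bar> \<le> 1" if "i \<in> {1..n}" for i x y
  proof -
    have "\<bar>t * q i x y + (1-t) * q' i x y\<bar> \<le> t * \<bar>q i x y\<bar> + (1-t) * \<bar>q' i x y\<bar>"
      using t by (metis (no_types, opaque_lifting) abs_mult abs_of_nonneg abs_triangle_ineq diff_ge_0_iff_ge)
    also have "\<dots> \<le> t * 1 + (1-t) * 1" using hq that t by (intro add_mono mult_left_mono) auto
    finally show ?thesis by simp
  qed
  moreover have "0 \<le> t * r1 i + (1-t) * r1' i \<and> ereal (t * r1 i + (1-t) * r1' i) \<le> \<gamma>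
      \<and> 0 \<le> t * r2 i + (1-t) * r2' i \<and> ereal (t * r2 i + (1-t) * r2' i) \<le> \<gamma>" if "i \<in> {1..n}" for i
    using hr that t by (auto intro!: ereal_comb_le add_nonneg_nonneg mult_nonneg_nonneg)
  ultimately have zD: "z \<in> dual_feasible n \<gamma>"
    unfolding z_def dual_feasible_def Sinf_def sup_norm_le1 by auto
  define a where "a i x = C i x + divw w (q i) x + r2 i - r1 i" for i x
  define a' where "a' i x = C i x + divw w (q' i) x + r2' i - r1' i" for i x
  define K where "K = (\<Sum>i=1..n. r1 i * real (Sl i) - r2 i * real (Su i))"
  define K' where "K' = (\<Sum>i=1..n. r1' i * real (Sl i) - r2' i * real (Su i))"
  have "Lag w n C Sl Su u z = t * Lag w n C Sl Su u d + (1-t) * Lag w n C Sl Su u d'" for u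
  proof -
    have e1: "C i x + divw w (\<lambda>a b. t * q i a b + (1-t) * q' i a b) x + (t * r2 i + (1-t) * r2' i) - (t * r1 i + (1-t) * r1' i)
        = t * a i x + (1-t) * a' i x" for i x
      unfolding divw_lin a_def a'_def by (simp add: algebra_simps)
    have e2: "(\<Sum>i=1..n. (t * r1 i + (1-t) * r1' i) * real (Sl i) - (t * r2 i + (1-t) * r2' i) * real (Su i))
       = t * K + (1-t) * K'"
    proof -
      have "(\<Sum>i=1..n. (t * r1 i + (1-t) * r1' i) * real (Sl i) - (t * r2 i + (1-t) * r2' i) * real (Su i))
        = (\<Sum>i=1..n. t * (r1 i * real (Sl i) - r2 i * real (Su i)) + (1-t) * (r1' i * real (Sl i) - r2' i * real (Su i)))"
        by (rule sum.cong) (simp_all add: algebra_simps)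
      then show ?thesis unfolding K_def K'_def by (simp only: sum_comb)
    qed
    have "Lag w n C Sl Su u z = (\<Sum>i=1..n. \<Sum>x\<in>UNIV. u i x * (t * a i x + (1-t) * a' i x)) + (t * K + (1-t) * K')"
      unfolding z_def Lag_def prod.case e1 e2 ..
    also have "\<dots> = t * Lag w n C Sl Su u d + (1-t) * Lag w n C Sl Su u d'"
      unfolding lin3 d d' Lag_def prod.case a_def a'_def K_def K'_def by (simp add: algebra_simps)
    finally show ?thesis .
  qed
  then show ?thesis using zD by blast
qed

lemma Lag_cont: "continuous_on UNIV (\<lambda>u. Lag w n C Sl Su u d)"
proof -
  obtain q r1 r2 where d: "d = (q, r1, r2)" by (cases d) auto
  show ?thesis unfolding d Lag_def by (simp, intro continuous_intros)
qed

lemma pen_le: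
  fixes \<gamma> :: ereal
  assumes g0: "0 \<le> \<gamma>" and S: "Sl \<le> Su" and r: "0 \<le> r1" "ereal r1 \<le> \<gamma>" "0 \<le> r2" "ereal r2 \<le> \<gamma>"
    and f: "\<gamma> = \<infinity> \<longrightarrow> real Sl \<le> t \<and> t \<le> real Su"
  shows "r1 * (real Sl - t) + r2 * (t - real Su) \<le> (if 0 < \<gamma> \<and> \<gamma> < \<infinity> then Pgam (real_of_ereal \<gamma>) Sl Su t else 0)"
proof (cases \<gamma>)
  case (real g)
  show ?thesis
  proof (cases "g = 0")
    case True
    then have "r1 = 0" "r2 = 0" using r real by auto
    then show ?thesis using True real by simp
  next
    case False
    then have gp: "0 < \<gamma>" "\<gamma> < \<infinity>" using g0 real by auto
    have rg: "r1 \<le> g" "r2 \<le> g" using r real by auto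
    have "r1 * (real Sl - t) + r2 * (t - real Su) \<le> Pgam g Sl Su t"
    proof (cases "real Sl \<le> t \<and> t \<le> real Su")
      case True
      have "r1 * (real Sl - t) \<le> 0" "r2 * (t - real Su) \<le> 0"
        using True r by (auto intro: mult_nonneg_nonpos)
      then show ?thesis using True unfolding Pgam_def by simp
    next
      case nb: False
      show ?thesis
      proof (cases "t > real Su")
        case True
        have "r1 * (real Sl - t) \<le> 0" using True S r by (auto intro: mult_nonneg_nonpos)
        moreover have "r2 * (t - real Su) \<le> g * (t - real Su)" using True rg by (intro mult_right_mono) auto
        moreover have "Pgam g Sl Su t = g * (t - real Su)" using True unfolding Pgam_def by simp
        ultimately show ?thesis by linarith
      next
        case False
        then have tl: "t < real Sl" using nb by auto
        have "r2 * (t - real Su) \<le> 0" using tl S r by (auto intro: mult_nonneg_nonpos)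
        moreover have "r1 * (real Sl - t) \<le> g * (real Sl - t)" using tl rg by (intro mult_right_mono) auto
        moreover have "Pgam g Sl Su t = g * (real Sl - t)" using tl False unfolding Pgam_def by simp
        ultimately show ?thesis by linarith
      qed
    qed
    then show ?thesis using gp real by simp
  qed
next
  case PInf
  then have "r1 * (real Sl - t) \<le> 0" "r2 * (t - real Su) \<le> 0"
    using f r by (auto intro: mult_nonneg_nonpos)
  then show ?thesis using PInf by simp
next
  case MInf then show ?thesis using g0 by simp
qed

lemma pen_eq:
  fixes \<gamma> :: ereal
  assumes g0: "0 \<le> \<gamma>" and S: "Sl \<le> Su"
    and f: "\<gamma> = \<infinity> \<longrightarrow> real Sl \<le> t \<and> t \<le> real Su"
  shows "\<exists>p. 0 \<le> fst p \<and> ereal (fst p) \<le> \<gamma> \<and> 0 \<le> snd p \<and> ereal (snd p) \<le> \<gamma> \<and>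
     fst p * (real Sl - t) + snd p * (t - real Su) = (if 0 < \<gamma> \<and> \<gamma> < \<infinity> then Pgam (real_of_ereal \<gamma>) Sl Su t else 0)"
proof (cases "0 < \<gamma> \<and> \<gamma> < \<infinity>")
  case False
  then show ?thesis using g0 by (intro exI[of _ "(0,0)"]) auto
next
  case True
  then obtain g where g: "\<gamma> = ereal g" "0 < g" by (cases \<gamma>) auto
  define p where "p = (if t < real Sl then g else 0, if t > real Su then g else 0)"
  have "fst p * (real Sl - t) + snd p * (t - real Su) = Pgam g Sl Su t"
    using S unfolding p_def Pgam_def by auto
  then show ?thesis using g True unfolding p_def by (intro exI[of _ p]) (auto simp: p_def)
qed

lemma sum_if_const: "(\<Sum>i\<in>A. if P then f i else 0) = (if P then sum f A else (0::real))"
  by (cases P) auto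

lemma Lag_le_E:
  fixes w :: "'v::finite \<Rightarrow> 'v \<Rightarrow> real"
  assumes sym: "\<And>x y. w x y = w y x" and pos: "\<And>x y. 0 \<le> w x y"
    and S: "\<And>i. i \<in> {1..n} \<Longrightarrow> Sl i \<le> Su i" and g0: "0 \<le> \<gamma>"
    and u: "u \<in> primal_feasible n \<gamma> Sl Su" and d: "d \<in> dual_feasible n \<gamma>"
  shows "Lag w n C Sl Su u d \<le> primal_energy w n \<gamma> C Sl Su u"
proof -
  obtain q r1 r2 where dd: "d = (q, r1, r2)" by (cases d) auto
  have hq: "\<forall>i\<in>{1..n}. \<forall>x y. \<bar>q i x y\<bar> \<le> 1" and
       hr: "\<forall>i\<in>{1..n}. 0 \<le> r1 i \<and> ereal (r1 i) \<le> \<gamma> \<and> 0 \<le> r2 i \<and> ereal (r2 i) \<le> \<gamma>"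
    using d unfolding dd dual_feasible_def Sinf_def sup_norm_le1 by auto
  have hu: "\<gamma> = \<infinity> \<longrightarrow> (\<forall>i\<in>{1..n}. real (Sl i) \<le> mass (u i) \<and> mass (u i) \<le> real (Su i))"
    using u unfolding primal_feasible_def by auto
  have "(\<Sum>i=1..n. \<Sum>x\<in>UNIV. u i x * divw w (q i) x) \<le> (\<Sum>i=1..n. TVw w (u i))"
    using hq by (intro sum_mono div_le_TV[OF sym pos]) auto
  moreover have "(\<Sum>i=1..n. r1 i * (real (Sl i) - mass (u i)) + r2 i * (mass (u i) - real (Su i)))
     \<le> (\<Sum>i=1..n. if 0 < \<gamma> \<and> \<gamma> < \<infinity> then Pgam (real_of_ereal \<gamma>) (Sl i) (Su i) (mass (u i)) else 0)"
    using hr hu S by (intro sum_mono pen_le[OF g0]) auto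
  moreover have "(\<Sum>i=1..n. \<Sum>x\<in>UNIV. C i x * u i x) = (\<Sum>i=1..n. \<Sum>x\<in>UNIV. u i x * C i x)"
    by (simp add: mult.commute)
  ultimately show ?thesis
    unfolding dd Lag_decomp primal_energy_def sum_if_const by linarith
qed

lemma E_attained:
  fixes w :: "'v::finite \<Rightarrow> 'v \<Rightarrow> real"
  assumes sym: "\<And>x y. w x y = w y x"
    and S: "\<And>i. i \<in> {1..n} \<Longrightarrow> Sl i \<le> Su i" and g0: "0 \<le> \<gamma>"
    and u: "u \<in> primal_feasible n \<gamma> Sl Su"
  shows "\<exists>d\<in>dual_feasible n \<gamma>. Lag w n C Sl Su u d = primal_energy w n \<gamma> C Sl Su u"
proof -
  have hu: "\<gamma> = \<infinity> \<longrightarrow> (\<forall>i\<in>{1..n}. real (Sl i) \<le> mass (u i) \<and> mass (u i) \<le> real (Su i))"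
    using u unfolding primal_feasible_def by auto
  have ex: "\<forall>i\<in>{1..n}. \<exists>p. 0 \<le> fst p \<and> ereal (fst p) \<le> \<gamma> \<and> 0 \<le> snd p \<and> ereal (snd p) \<le> \<gamma> \<and>
     fst p * (real (Sl i) - mass (u i)) + snd p * (mass (u i) - real (Su i))
       = (if 0 < \<gamma> \<and> \<gamma> < \<infinity> then Pgam (real_of_ereal \<gamma>) (Sl i) (Su i) (mass (u i)) else 0)"
    using hu S by (intro ballI pen_eq[OF g0]) auto
  obtain f where f: "\<forall>i\<in>{1..n}. 0 \<le> fst (f i) \<and> ereal (fst (f i)) \<le> \<gamma> \<and> 0 \<le> snd (f i) \<and> ereal (snd (f i)) \<le> \<gamma> \<and>
     fst (f i) * (real (Sl i) - mass (u i)) + snd (f i) * (mass (u i) - real (Su i))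
       = (if 0 < \<gamma> \<and> \<gamma> < \<infinity> then Pgam (real_of_ereal \<gamma>) (Sl i) (Su i) (mass (u i)) else 0)"
    using bchoice[OF ex] by blast
  define d where "d = ((\<lambda>i a b. sgn (u i a - u i b)), (\<lambda>i. fst (f i)), (\<lambda>i. snd (f i)))"
  have dD: "d \<in> dual_feasible n \<gamma>"
    using f unfolding d_def dual_feasible_def Sinf_def sup_norm_le1 by (auto simp: abs_sgn_eq)
  have p: "(\<Sum>i=1..n. fst (f i) * (real (Sl i) - mass (u i)) + snd (f i) * (mass (u i) - real (Su i)))
     = (\<Sum>i=1..n. if 0 < \<gamma> \<and> \<gamma> < \<infinity> then Pgam (real_of_ereal \<gamma>) (Sl i) (Su i) (mass (u i)) else 0)"
    by (rule sum.cong) (use f in auto)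
  have c: "(\<Sum>i=1..n. \<Sum>x\<in>UNIV. C i x * u i x) = (\<Sum>i=1..n. \<Sum>x\<in>UNIV. u i x * C i x)"
    by (simp add: mult.commute)
  have "Lag w n C Sl Su u d = (\<Sum>i=1..n. \<Sum>x\<in>UNIV. u i x * C i x) + (\<Sum>i=1..n. TVw w (u i))
      + (\<Sum>i=1..n. fst (f i) * (real (Sl i) - mass (u i)) + snd (f i) * (mass (u i) - real (Su i)))"
    unfolding d_def Lag_decomp div_eq_TV[OF sym] by simp
  also have "\<dots> = primal_energy w n \<gamma> C Sl Su u"
    unfolding p primal_energy_def sum_if_const c by simp
  finally have "Lag w n C Sl Su u d = primal_energy w n \<gamma> C Sl Su u" .
  then show ?thesis using dD by blast
qed

lemma sum_delta_mult: "i0 \<in> A \<Longrightarrow> finite A \<Longrightarrow> (\<Sum>i\<in>A. (if i = i0 then M else 0) * f i) = M * (f i0 :: real)"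
proof -
  assume a: "i0 \<in> A" "finite A"
  have "(\<Sum>i\<in>A. (if i = i0 then M else 0) * f i) = (\<Sum>i\<in>A. if i = i0 then M * f i else 0)"
    by (rule sum.cong) auto
  then show ?thesis using a by (simp add: sum.delta')
qed

lemma infeasible_unbounded:
  fixes w :: "'v::finite \<Rightarrow> 'v \<Rightarrow> real"
  assumes inf: "\<gamma> = \<infinity>" and u: "u \<in> Bprime n" and nf: "u \<notin> primal_feasible n \<gamma> Sl Su"
  shows "\<exists>d\<in>dual_feasible n \<gamma>. Lag w n C Sl Su u d > c"
proof -
  obtain i0 where i0: "i0 \<in> {1..n}" "\<not> (real (Sl i0) \<le> mass (u i0) \<and> mass (u i0) \<le> real (Su i0))"
    using u nf inf unfolding primal_feasible_def by auto
  define A where "A = (\<Sum>i=1..n. \<Sum>x\<in>UNIV. u i x * C i x)"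
  have div0: "divw w (\<lambda>_ _. 0) x = 0" for x unfolding divw_def by simp
  show ?thesis
  proof (cases "mass (u i0) < real (Sl i0)")
    case True
    define M where "M = (\<bar>c - A\<bar> + 1) / (real (Sl i0) - mass (u i0))"
    have Mp: "M \<ge> 0" using True unfolding M_def by auto
    have MM: "M * (real (Sl i0) - mass (u i0)) = \<bar>c - A\<bar> + 1" using True unfolding M_def by auto
    define d where "d = ((\<lambda>(i::nat) (a::'v) (b::'v). 0::real), (\<lambda>i. if i = i0 then M else 0), (\<lambda>i::nat. 0::real))"
    have dD: "d \<in> dual_feasible n \<gamma>" unfolding d_def dual_feasible_def Sinf_def sup_norm_le1 using Mp inf by auto
    have "Lag w n C Sl Su u d = A + M * (real (Sl i0) - mass (u i0))"
      unfolding d_def Lag_decomp A_def div0 using i0(1)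
      by (simp add: sum_delta_mult)
    then have "Lag w n C Sl Su u d > c" using MM by linarith
    then show ?thesis using dD by blast
  next
    case False
    then have F: "mass (u i0) > real (Su i0)" using i0 by auto
    define M where "M = (\<bar>c - A\<bar> + 1) / (mass (u i0) - real (Su i0))"
    have Mp: "M \<ge> 0" using F unfolding M_def by auto
    have MM: "M * (mass (u i0) - real (Su i0)) = \<bar>c - A\<bar> + 1" using F unfolding M_def by auto
    define d where "d = ((\<lambda>(i::nat) (a::'v) (b::'v). 0::real), (\<lambda>i::nat. 0::real), (\<lambda>i. if i = i0 then M else 0))"
    have dD: "d \<in> dual_feasible n \<gamma>" unfolding d_def dual_feasible_def Sinf_def sup_norm_le1 using Mp inf by auto
    have "Lag w n C Sl Su u d = A + M * (mass (u i0) - real (Su i0))"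
      unfolding d_def Lag_decomp A_def div0 using i0(1)
      by (simp add: sum_delta_mult)
    then have "Lag w n C Sl Su u d > c" using MM by linarith
    then show ?thesis using dD by blast
  qed
qed

lemma compact_PiE_UNIV:
  assumes "\<And>i. compact (S i)"
  shows "compact (Pi\<^sub>E UNIV S :: ('a \<Rightarrow> 'b::topological_space) set)"
proof -
  have "compactin (product_topology (\<lambda>_. euclidean) UNIV) (Pi\<^sub>E UNIV S :: ('a \<Rightarrow> 'b) set)"
    using assms by (auto simp: compactin_PiE compactin_euclidean_iff)
  then show ?thesis by (simp add: euclidean_product_topology compactin_euclidean_iff)
qed

lemma Xs_eq: "Xs n = (Pi\<^sub>E UNIV (\<lambda>i. if i \<in> {1..n} then Pi\<^sub>E UNIV (\<lambda>_::'v::finite. {0..1::real}) else {\<lambda>_. 0}))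
    \<inter> {u. \<forall>x. (\<Sum>i=1..n. u i x) = 1}"
  unfolding Xs_def Bprime_def PiE_UNIV_domain by (auto simp: Pi_iff split: if_splits)

lemma Xs_compact: "compact (Xs n :: (nat \<Rightarrow> 'v::finite \<Rightarrow> real) set)"
proof -
  have c1: "compact (Pi\<^sub>E UNIV (\<lambda>i. if i \<in> {1..n} then Pi\<^sub>E UNIV (\<lambda>_::'v. {0..1::real}) else {\<lambda>_. 0}))"
    by (intro compact_PiE_UNIV) (auto intro: compact_PiE_UNIV)
  have c2: "closed {u :: nat \<Rightarrow> 'v \<Rightarrow> real. \<forall>x. (\<Sum>i=1..n. u i x) = 1}"
    by (intro closed_Collect_all closed_Collect_eq continuous_intros)
  show ?thesis unfolding Xs_eq using c1 c2 by (rule compact_Int_closed)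
qed

lemma XF_compact:
  "compact (Xs n \<inter> primal_feasible n \<gamma> Sl Su :: (nat \<Rightarrow> 'v::finite \<Rightarrow> real) set)"
proof -
  have eq: "Xs n \<inter> primal_feasible n \<gamma> Sl Su = Xs n \<inter>
      {u. \<gamma> = \<infinity> \<longrightarrow> (\<forall>i\<in>{1..n}. real (Sl i) \<le> mass (u i) \<and> mass (u i) \<le> real (Su i))}"
    unfolding Xs_def primal_feasible_def by auto
  have "closed {u :: nat \<Rightarrow> 'v \<Rightarrow> real. \<gamma> = \<infinity> \<longrightarrow> (\<forall>i\<in>{1..n}. real (Sl i) \<le> mass (u i) \<and> mass (u i) \<le> real (Su i))}"
  proof (cases "\<gamma> = \<infinity>")
    case True
    have "{u :: nat \<Rightarrow> 'v \<Rightarrow> real. \<gamma> = \<infinity> \<longrightarrow> (\<forall>i\<in>{1..n}. real (Sl i) \<le> mass (u i) \<and> mass (u i) \<le> real (Su i))}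
       = (\<Inter>i\<in>{1..n}. {u. real (Sl i) \<le> mass (u i) \<and> mass (u i) \<le> real (Su i)})"
      using True by auto
    moreover have "closed {u :: nat \<Rightarrow> 'v \<Rightarrow> real. real (Sl i) \<le> mass (u i) \<and> mass (u i) \<le> real (Su i)}" for i
      unfolding mass_def by (intro closed_Collect_conj closed_Collect_le continuous_intros)
    ultimately show ?thesis by auto
  next
    case False then show ?thesis by simp
  qed
  then show ?thesis unfolding eq by (intro compact_Int_closed Xs_compact)
qed

lemma Pgam_max: "Sl \<le> Su \<Longrightarrow> Pgam g Sl Su t = g * max 0 (t - real Su) + g * max 0 (real Sl - t)"
  unfolding Pgam_def by (auto simp: max_def)

lemma E_cont:
  fixes w :: "'v::finite \<Rightarrow> 'v \<Rightarrow> real"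
  assumes S: "\<And>i. i \<in> {1..n} \<Longrightarrow> Sl i \<le> Su i"
  shows "continuous_on A (\<lambda>u. primal_energy w n \<gamma> C Sl Su u)"
proof -
  define E' where "E' u = (\<Sum>i=1..n. \<Sum>x\<in>UNIV. C i x * u i x) + (\<Sum>i=1..n. TVw w (u i))
     + (if 0 < \<gamma> \<and> \<gamma> < \<infinity>
        then (\<Sum>i=1..n. real_of_ereal \<gamma> * max 0 (mass (u i) - real (Su i)) + real_of_ereal \<gamma> * max 0 (real (Sl i) - mass (u i))) else 0)"
    for u :: "nat \<Rightarrow> 'v \<Rightarrow> real"
  have eq: "primal_energy w n \<gamma> C Sl Su u = E' u" for u
  proof -
    have p: "(\<Sum>i=1..n. Pgam (real_of_ereal \<gamma>) (Sl i) (Su i) (mass (u i))) =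
      (\<Sum>i=1..n. real_of_ereal \<gamma> * max 0 (mass (u i) - real (Su i)) + real_of_ereal \<gamma> * max 0 (real (Sl i) - mass (u i)))"
      by (rule sum.cong[OF refl], rule Pgam_max, rule S)
    show ?thesis unfolding primal_energy_def E'_def p ..
  qed
  have "continuous_on A E'"
  proof (cases "0 < \<gamma> \<and> \<gamma> < \<infinity>")
    case True
    then show ?thesis unfolding E'_def TVw_def mass_def by (simp, auto intro!: continuous_intros)
  next
    case False
    then show ?thesis unfolding E'_def TVw_def mass_def by (simp, auto intro!: continuous_intros)
  qed
  then show ?thesis unfolding eq[abs_def] .
qed

lemma XF_nonempty:
  fixes Sl Su :: "nat \<Rightarrow> nat"
  assumes n: "n \<ge> 1" and S: "\<And>i. i \<in> {1..n} \<Longrightarrow> Sl i \<le> Su i"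
    and l: "(\<Sum>i=1..n. Sl i) \<le> CARD('v::finite)" and r: "CARD('v) \<le> (\<Sum>i=1..n. Su i)"
  shows "\<exists>u::nat \<Rightarrow> 'v \<Rightarrow> real. u \<in> Xs n \<inter> primal_feasible n \<gamma> Sl Su"
proof -
  define N where "N = real CARD('v)"
  have Np: "N > 0" unfolding N_def by simp
  define SL where "SL = (\<Sum>i=1..n. real (Sl i))"
  define SU where "SU = (\<Sum>i=1..n. real (Su i))"
  have lN: "SL \<le> N" unfolding SL_def N_def using l by (metis of_nat_le_iff of_nat_sum)
  have rN: "N \<le> SU" unfolding SU_def N_def using r by (metis of_nat_le_iff of_nat_sum)
  define th where "th = (if SU = SL then 0 else (N - SL) / (SU - SL))"
  have th: "0 \<le> th" "th \<le> 1" using lN rN unfolding th_def by (auto simp: divide_le_eq_1)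
  define sv where "sv i = real (Sl i) + th * (real (Su i) - real (Sl i))" for i
  have sum_s: "(\<Sum>i=1..n. sv i) = N"
  proof -
    have "(\<Sum>i=1..n. sv i) = SL + th * (SU - SL)"
      unfolding sv_def SL_def SU_def by (simp add: sum.distrib sum_distrib_left sum_subtractf right_diff_distrib)
    also have "\<dots> = N" using lN rN unfolding th_def by auto
    finally show ?thesis .
  qed
  have sb: "real (Sl i) \<le> sv i \<and> sv i \<le> real (Su i)" if "i \<in> {1..n}" for i
  proof -
    have d: "0 \<le> real (Su i) - real (Sl i)" using S[OF that] by simp
    have "th * (real (Su i) - real (Sl i)) \<le> 1 * (real (Su i) - real (Sl i))"
      using th d by (intro mult_right_mono) auto
    moreover have "0 \<le> th * (real (Su i) - real (Sl i))" using th d by simp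
    ultimately show ?thesis unfolding sv_def by simp
  qed
  have s0: "0 \<le> sv i" if "i \<in> {1..n}" for i using sb[OF that] by (meson of_nat_0_le_iff order_trans)
  have sN: "sv i \<le> N" if "i \<in> {1..n}" for i
    using member_le_sum[of i "{1..n}" sv] s0 that sum_s by auto
  define u where "u i x = (if i \<in> {1..n} then sv i / N else 0)" for i and x :: 'v
  have mu: "mass (u i) = sv i" if "i \<in> {1..n}" for i
    unfolding mass_def u_def using that Np by (simp add: N_def)
  have "u \<in> Xs n"
  proof -
    have "(\<Sum>i=1..n. u i x) = 1" for x
    proof -
      have "(\<Sum>i=1..n. u i x) = (\<Sum>i=1..n. sv i) / N" unfolding u_def by (simp add: sum_divide_distrib)
      then show ?thesis using sum_s Np by simp
    qed
    moreover have "0 \<le> u i x \<and> u i x \<le> 1" if "i \<in> {1..n}" for i x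
      using that s0 sN Np unfolding u_def by auto
    ultimately show ?thesis unfolding Xs_def Bprime_def u_def by (auto simp: fun_eq_iff)
  qed
  moreover have "u \<in> primal_feasible n \<gamma> Sl Su"
    using \<open>u \<in> Xs n\<close> mu sb unfolding primal_feasible_def Xs_def by auto
  ultimately show ?thesis by blast
qed

theorem theorem1:
  fixes w :: "'v::finite \<Rightarrow> 'v \<Rightarrow> real"
    and n :: nat and C :: "nat \<Rightarrow> 'v \<Rightarrow> real"
    and Sl Su :: "nat \<Rightarrow> nat" and \<gamma> :: ereal
  assumes "\<And>x y. w x y = w y x"
    and "\<And>x y. 0 \<le> w x y"
    and "n \<ge> 2"
    and "\<And>i. i \<in> {1..n} \<Longrightarrow> Sl i \<le> Su i"
    and "(\<Sum>i=1..n. Sl i) \<le> CARD('v)" and "CARD('v) \<le> (\<Sum>i=1..n. Su i)"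
    and "0 \<le> \<gamma>"
  shows "\<exists>u \<in> primal_feasible n \<gamma> Sl Su.
           (\<forall>v \<in> primal_feasible n \<gamma> Sl Su.
               primal_energy w n \<gamma> C Sl Su u \<le> primal_energy w n \<gamma> C Sl Su v)
         \<and> (SUP d \<in> dual_feasible n \<gamma>. ereal (dual_objective w n C Sl Su d))
             = ereal (primal_energy w n \<gamma> C Sl Su u)"
proof -
  note sym = assms(1) and pos = assms(2) and S = assms(4) and g0 = assms(7)
  have n1: "n \<ge> 1" using assms(3) by simp
  let ?XF = "Xs n \<inter> primal_feasible n \<gamma> Sl Su :: (nat \<Rightarrow> 'v \<Rightarrow> real) set"
  let ?X = "Xs n :: (nat \<Rightarrow> 'v \<Rightarrow> real) set"
  let ?E = "\<lambda>u. primal_energy w n \<gamma> C Sl Su u"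
  let ?D = "dual_feasible n \<gamma> :: ((nat \<Rightarrow> 'v \<Rightarrow> 'v \<Rightarrow> real) \<times> (nat \<Rightarrow> real) \<times> (nat \<Rightarrow> real)) set"
  have ne: "?XF \<noteq> {}" using XF_nonempty[OF n1 S assms(5,6), of \<gamma>] by blast
  obtain us where us: "us \<in> ?XF" "\<forall>v\<in>?XF. ?E us \<le> ?E v"
  proof -
    have ec: "continuous_on ?XF ?E" by (rule E_cont) (rule S)
    show ?thesis using continuous_attains_inf[OF XF_compact ne ec] that by blast
  qed
  have opt: "?E us \<le> ?E v" if v: "v \<in> primal_feasible n \<gamma> Sl Su" for v
  proof -
    define v' where "v' i = (if i \<in> {1..n} then v i else (\<lambda>_. 0))" for i
    have ms: "mass (v' i) = mass (v i)" if "i \<in> {1..n}" for i using that unfolding v'_def by simp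
    have "v' \<in> ?XF" using v unfolding v'_def Xs_def primal_feasible_def Bprime_def
      by (auto simp: mass_def)
    then have "?E us \<le> ?E v'" using us by blast
    moreover have "?E v' = ?E v"
    proof -
      have a: "(\<Sum>i=1..n. \<Sum>x\<in>UNIV. C i x * v' i x) = (\<Sum>i=1..n. \<Sum>x\<in>UNIV. C i x * v i x)"
        by (rule sum.cong) (auto simp: v'_def)
      have b: "(\<Sum>i=1..n. TVw w (v' i)) = (\<Sum>i=1..n. TVw w (v i))"
        by (rule sum.cong) (auto simp: v'_def)
      have c: "(\<Sum>i=1..n. Pgam (real_of_ereal \<gamma>) (Sl i) (Su i) (mass (v' i)))
          = (\<Sum>i=1..n. Pgam (real_of_ereal \<gamma>) (Sl i) (Su i) (mass (v i)))"
        by (rule sum.cong) (auto simp: ms)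
      show ?thesis unfolding primal_energy_def a b c ..
    qed
    ultimately show ?thesis by simp
  qed
  have usF: "us \<in> primal_feasible n \<gamma> Sl Su" and usB: "us \<in> Bprime n"
    using us(1) unfolding Xs_def by auto
  have d0: "((\<lambda>i a b. 0), (\<lambda>i. 0), (\<lambda>i. 0)) \<in> ?D"
    using g0 unfolding dual_feasible_def Sinf_def sup_norm_le1 by (auto simp: zero_ereal_def)
  have le: "(SUP d \<in> ?D. ereal (dual_objective w n C Sl Su d)) \<le> ereal (?E us)"
  proof (rule SUP_least)
    fix d assume d: "d \<in> ?D"
    have "dual_objective w n C Sl Su d \<le> Lag w n C Sl Su us d" by (rule Lag_ge_dual[OF usB])
    also have "\<dots> \<le> ?E us" by (rule Lag_le_E[OF sym pos S g0 usF d])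
    finally show "ereal (dual_objective w n C Sl Su d) \<le> ereal (?E us)" by simp
  qed
  have ge: "ereal (?E us) \<le> (SUP d \<in> ?D. ereal (dual_objective w n C Sl Su d))"
    unfolding le_SUP_iff
  proof (intro allI impI)
    fix y assume y: "y < ereal (?E us)"
    show "\<exists>d\<in>?D. y < ereal (dual_objective w n C Sl Su d)"
    proof (cases y)
      case MInf then show ?thesis using d0 by auto
    next
      case PInf then show ?thesis using y by simp
    next
      case (real c)
      then have c: "c < ?E us" using y by simp
      have cov: "\<forall>x\<in>?X. \<exists>d\<in>?D. Lag w n C Sl Su x d > c"
      proof
        fix x assume x: "x \<in> ?X"
        show "\<exists>d\<in>?D. Lag w n C Sl Su x d > c"
        proof (cases "x \<in> primal_feasible n \<gamma> Sl Su")
          case True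
          obtain d where dd: "d \<in> ?D" "Lag w n C Sl Su x d = ?E x"
            using E_attained[where w=w and n=n and Sl=Sl and Su=Su and \<gamma>=\<gamma> and u=x and C=C] sym S g0 True by blast
          have "?E us \<le> ?E x" using opt True by blast
          then have "c < Lag w n C Sl Su x d" using c dd(2) by linarith
          then show ?thesis using dd(1) by blast
        next
          case False
          have xB: "x \<in> Bprime n" using x unfolding Xs_def by auto
          then have "\<gamma> = \<infinity>" using False unfolding primal_feasible_def by auto
          then show ?thesis using infeasible_unbounded[OF _ xB False] by blast
        qed
      qed
      have "\<exists>z\<in>?D. \<forall>x\<in>?X. Lag w n C Sl Su x z > c"
      proof (rule minimax_cover[where L="\<lambda>u d. Lag w n C Sl Su u d"])
        show "?D \<noteq> {}" using d0 by blast
        show "\<forall>y\<in>?D. continuous_on UNIV (\<lambda>x. Lag w n C Sl Su x y)" using Lag_cont by blast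
        show "\<forall>y\<in>?D. \<forall>y'\<in>?D. \<forall>t\<in>{0..1::real}. \<exists>z\<in>?D. \<forall>x\<in>?X.
            Lag w n C Sl Su x z = t * Lag w n C Sl Su x y + (1-t) * Lag w n C Sl Su x y'"
        proof (intro ballI)
          fix y y' and t :: real assume h: "y \<in> ?D" "y' \<in> ?D" "t \<in> {0..1}"
          obtain z where "z \<in> ?D" "\<forall>u. Lag w n C Sl Su u z = t * Lag w n C Sl Su u y + (1-t) * Lag w n C Sl Su u y'"
            using D_comb[OF h, where w=w and C=C and Sl=Sl and Su=Su] by blast
          then show "\<exists>z\<in>?D. \<forall>x\<in>?X. Lag w n C Sl Su x z = t * Lag w n C Sl Su x y + (1-t) * Lag w n C Sl Su x y'"
            by blast
        qed
        show "compact (Xs n :: (nat \<Rightarrow> 'v \<Rightarrow> real) set)" by (rule Xs_compact)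
        show "\<forall>x\<in>?X. \<forall>x'\<in>?X. \<forall>t\<in>{0..1::real}. \<exists>z\<in>?X. \<forall>y\<in>?D.
            Lag w n C Sl Su z y = t * Lag w n C Sl Su x y + (1-t) * Lag w n C Sl Su x' y"
        proof (intro ballI)
          fix x x' and t :: real assume h: "x \<in> ?X" "x' \<in> ?X" "t \<in> {0..1}"
          have "(\<lambda>i v. t * x i v + (1-t) * x' i v) \<in> ?X" by (rule Xs_comb[OF h])
          moreover have "\<forall>y\<in>?D. Lag w n C Sl Su (\<lambda>i v. t * x i v + (1-t) * x' i v) y
              = t * Lag w n C Sl Su x y + (1-t) * Lag w n C Sl Su x' y"
            by (simp add: Lag_lin_u)
          ultimately show "\<exists>z\<in>?X. \<forall>y\<in>?D. Lag w n C Sl Su z y = t * Lag w n C Sl Su x y + (1-t) * Lag w n C Sl Su x' y"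
            by blast
        qed
        show "\<forall>x\<in>?X. \<exists>y\<in>?D. Lag w n C Sl Su x y > c" by (rule cov)
      qed
      then obtain z where z: "z \<in> ?D" "\<forall>x\<in>?X. Lag w n C Sl Su x z > c" by blast
      obtain x0 where "x0 \<in> ?X" "Lag w n C Sl Su x0 z = dual_objective w n C Sl Su z"
        using dual_attained[OF n1] by blast
      then have "dual_objective w n C Sl Su z > c" using z by auto
      then show ?thesis using z(1) real by auto
    qed
  qed
  show ?thesis using usF opt le ge by (intro bexI[of _ us]) (auto intro: antisym)
qed

end
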